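(* Let $p$ be a prime, let $n\geqslant 2$ be an integer, let $m\geqslant 0$ be an integer and let $k\geqslant 2$ be an integer not divisible by $p$. For positive integers $a,r$ let $w(a,r)=\frac{1}{r}\sum_{d\mid r}\mu(d)\,a^{r/d}$, where $\mu$ is the Möbius function. For $i=0,1,\dots,m$ define $$a_i = \frac{w(n,p^{m-i}k)^{p^i}}{p^i\, w(n,p^mk)}.$$ Suppose that $0 < s \leqslant i \leqslant m$. Then $$\frac{a_i}{a_{i-s}} \leqslant p^{-s}\left(\frac{2p^s}{(p^{m-i}k)^{p^s-1}}\right)^{p^{i-s}}.$$ *)

theory Defs
  imports "HOL-Computational_Algebra.Primes" "HOL-Computational_Algebra.Squarefree" Complex_Main
begin

definition moebius :: "nat \<Rightarrow> int" where
  "moebius d = (if squarefree d then (-1) ^ card (prime_factors d) else 0)"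

definition necklace_w :: "nat \<Rightarrow> nat \<Rightarrow> real" where
  "necklace_w a r = (1 / real r) * (\<Sum>d\<in>{d. d dvd r}. real_of_int (moebius d) * real a ^ (r div d))"

definition seq_a :: "nat \<Rightarrow> nat \<Rightarrow> nat \<Rightarrow> nat \<Rightarrow> nat \<Rightarrow> real" where
  "seq_a p n m k i = necklace_w n (p ^ (m - i) * k) ^ (p ^ i) / (real p ^ i * necklace_w n (p ^ m * k))"

end

theory Submission
  imports Defs
begin

definition Lf :: "nat \<Rightarrow> nat \<Rightarrow> real" where
  "Lf a r = (\<Sum>d\<in>{d. d dvd r}. real_of_int (moebius d) * real a ^ (r div d))"

lemma w_Lf: "necklace_w a r = Lf a r / real r"
  by (simp add: necklace_w_def Lf_def)

lemma moebius_1: "moebius 1 = 1"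
  by (simp add: moebius_def)

lemma moebius_prime: "prime q \<Longrightarrow> moebius q = -1"
  by (simp add: moebius_def squarefree_prime prime_factorization_prime)

lemma moebius_cases: "moebius d = 1 \<or> moebius d = 0 \<or> moebius d = -1"
  unfolding moebius_def by (cases "even (card (prime_factors d))") (auto simp: neg_one_even_power neg_one_odd_power)

lemma Lf_split:
  assumes "r > 0"
  shows "Lf a r = real a ^ r + (\<Sum>d\<in>{d. d dvd r \<and> d \<noteq> 1}. real_of_int (moebius d) * real a ^ (r div d))"
proof -
  have fin: "finite {d. d dvd r}" using assms by simp
  have "{d. d dvd r} = insert 1 {d. d dvd r \<and> d \<noteq> 1}" by auto
  moreover have "finite {d. d dvd r \<and> d \<noteq> 1}" using fin by (rule finite_subset[rotated]) auto
  ultimately show ?thesis unfolding Lf_def using moebius_1 by simp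
qed

lemma geo_bound:
  fixes n :: real assumes "n \<ge> 2"
  shows "(\<Sum>j\<in>{1..h}. n ^ j) \<le> n ^ (h+1) - n"
proof (induction h)
  case 0 then show ?case by simp
next
  case (Suc h)
  have "(\<Sum>j\<in>{1..Suc h}. n ^ j) = (\<Sum>j\<in>{1..h}. n ^ j) + n ^ (h+1)"
    by (simp add: sum.atLeast_Suc_atMost_Suc_shift)
  also have "\<dots> \<le> n ^ (h+1) - n + n ^ (h+1)" using Suc by simp
  also have "\<dots> \<le> n ^ (Suc h + 1) - n"
  proof -
    have "2 * n ^ (h+1) \<le> n * n ^ (h+1)" using assms by (intro mult_right_mono) auto
    then show ?thesis by simp
  qed
  finally show ?case .
qed

lemma divisor_sum_bound:
  fixes n :: nat and r :: nat and E :: "nat set" and h :: nat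
  assumes "r > 0" "E \<subseteq> {d. d dvd r}" "\<And>d. d \<in> E \<Longrightarrow> r div d \<in> {1..h}"
  shows "(\<Sum>d\<in>E. real n ^ (r div d)) \<le> (\<Sum>j\<in>{1..h}. real n ^ j)"
proof -
  have inj: "inj_on (\<lambda>d. r div d) E"
  proof
    fix x y assume "x \<in> E" "y \<in> E" "r div x = r div y"
    then have "x dvd r" "y dvd r" using assms(2) by auto
    then show "x = y" using \<open>r div x = r div y\<close> assms(1)
      by (metis dvd_div_mult_self dvd_mult_div_cancel mult_cancel_left neq0_conv not_gr0 div_0 dvd_div_eq_0_iff)
  qed
  have "(\<Sum>d\<in>E. real n ^ (r div d)) = (\<Sum>j\<in>(\<lambda>d. r div d) ` E. real n ^ j)"
    using inj by (simp add: sum.reindex)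
  also have "\<dots> \<le> (\<Sum>j\<in>{1..h}. real n ^ j)"
    using assms(3) by (intro sum_mono2) auto
  finally show ?thesis .
qed


lemma Lf_lower:
  assumes "r > 0" "n \<ge> 2"
  shows "Lf n r \<ge> real n ^ r - (real n ^ (r div 2 + 1) - real n)"
proof -
  let ?D = "{d. d dvd r \<and> d \<noteq> 1}"
  have fin: "finite ?D" using assms(1) by (rule finite_subset[rotated, OF finite_divisors_nat]) auto
  have "(\<Sum>d\<in>?D. real_of_int (moebius d) * real n ^ (r div d)) \<ge> (\<Sum>d\<in>?D. - (real n ^ (r div d)))"
  proof (intro sum_mono)
    fix d assume "d \<in> ?D"
    show "- (real n ^ (r div d)) \<le> real_of_int (moebius d) * real n ^ (r div d)"
      using moebius_cases[of d] by auto
  qed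
  moreover have "(\<Sum>d\<in>?D. real n ^ (r div d)) \<le> (\<Sum>j\<in>{1..r div 2}. real n ^ j)"
  proof (rule divisor_sum_bound[OF assms(1)])
    fix d assume d: "d \<in> ?D"
    then have "d dvd r" "d \<noteq> 1" by auto
    then have "d \<ge> 2" "d \<le> r" using assms(1) by (auto simp: dvd_imp_le)
    then show "r div d \<in> {1..r div 2}"
      using \<open>d dvd r\<close> by (auto intro: div_le_mono2 simp: div_greater_zero_iff)
  qed auto
  moreover have "(\<Sum>j\<in>{1..r div 2}. real n ^ j) \<le> real n ^ (r div 2 + 1) - real n"
    using geo_bound[of "real n"] assms by simp
  ultimately show ?thesis using Lf_split[OF assms(1), of n] by (simp add: sum_negf)
qed

lemma Lf_pos:
  assumes "r > 0" "n \<ge> 2"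
  shows "Lf n r > 0"
proof -
  have "real n ^ (r div 2 + 1) \<le> real n ^ r"
    using assms by (intro power_increasing) auto
  then show ?thesis using Lf_lower[OF assms] assms by linarith
qed

lemma Lf_big:
  assumes "r \<ge> 4" "n \<ge> 2"
  shows "2 * Lf n r \<ge> real n ^ r"
proof -
  have "2 * real n ^ (r div 2 + 1) \<le> real n * real n ^ (r div 2 + 1)"
    using assms by (intro mult_right_mono) auto
  also have "\<dots> = real n ^ (r div 2 + 2)" by simp
  also have "\<dots> \<le> real n ^ r" using assms by (intro power_increasing) auto
  finally show ?thesis using Lf_lower[of r n] assms by linarith
qed


lemma moebius_one_big:
  assumes "moebius d = 1" "d \<noteq> 1" "d dvd r" "r > 0" "prime q" "\<And>q'. prime q' \<Longrightarrow> q' dvd r \<Longrightarrow> q \<le> q'"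
  shows "2 * q \<le> d"
proof -
  have d0: "d > 0" using assms(3,4) by (auto intro: Nat.gr0I)
  have sq: "squarefree d" and ev: "(-1::int) ^ card (prime_factors d) = 1"
    using assms(1) unfolding moebius_def by (auto split: if_splits)
  have "prime_factors d \<noteq> {}"
  proof -
    obtain p where "prime p" "p dvd d" using prime_factor_nat[OF assms(2)] by blast
    then have "p \<in> prime_factors d" using d0 by (auto simp: in_prime_factors_iff)
    then show ?thesis by auto
  qed
  then have "card (prime_factors d) \<noteq> 0" by simp
  moreover have "even (card (prime_factors d))"
    using ev by (metis neg_one_odd_power one_neq_neg_one)
  ultimately have "card (prime_factors d) \<ge> Suc (Suc 0)" by presburger
  then obtain q1 B where B: "prime_factors d = insert q1 B" "q1 \<notin> B" "Suc 0 \<le> card B"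
    by (auto simp: card_le_Suc_iff)
  have "B \<noteq> {}" using B(3) by auto
  then obtain q2 where "q2 \<in> B" by blast
  then have q1: "q1 \<in> prime_factors d" and q2: "q2 \<in> prime_factors d" and ne: "q1 \<noteq> q2"
    using B by auto
  have p1: "prime q1" "q1 dvd d" and p2: "prime q2" "q2 dvd d"
    using q1 q2 d0 by (auto simp: in_prime_factors_iff)
  have "q1 * q2 dvd d"
    using p1 p2 ne by (intro divides_mult) (auto simp: primes_coprime)
  then have "q1 * q2 \<le> d" using d0 by (simp add: dvd_imp_le)
  moreover have "q \<le> q1" using assms(6)[OF p1(1)] p1(2) assms(3) dvd_trans by blast
  moreover have "2 \<le> q2" using p2 prime_ge_2_nat by blast
  ultimately show ?thesis by (metis dual_order.trans mult.commute mult_le_mono)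
qed

lemma Lf_upper:
  assumes "r \<ge> 2" "n \<ge> 2"
  shows "Lf n r \<le> real n ^ r"
proof -
  have r0: "r > 0" using assms by simp
  have ex: "\<exists>q. prime q \<and> q dvd r" using prime_factor_nat[of r] assms by auto
  define q where "q = (LEAST q. prime q \<and> q dvd r)"
  have q: "prime q" "q dvd r" using LeastI_ex[OF ex] unfolding q_def by auto
  have qmin: "\<And>q'. prime q' \<Longrightarrow> q' dvd r \<Longrightarrow> q \<le> q'"
    unfolding q_def by (auto intro: Least_le)
  let ?D = "{d. d dvd r \<and> d \<noteq> 1}"
  let ?D2 = "?D - {q}"
  let ?E = "{d \<in> ?D2. moebius d = 1}"
  let ?f = "\<lambda>d. real_of_int (moebius d) * real n ^ (r div d)"
  have fin: "finite ?D" using r0 by (rule finite_subset[rotated, OF finite_divisors_nat]) auto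
  have qD: "q \<in> ?D" using q by (auto simp: prime_gt_1_nat)
  have "sum ?f ?D = ?f q + sum ?f ?D2"
    using fin qD by (simp add: sum.remove)
  also have "?f q = - (real n ^ (r div q))" using moebius_prime[OF q(1)] by simp
  also have "sum ?f ?D2 = sum ?f ?E + sum ?f (?D2 - ?E)"
  proof -
    have "finite ?D2" using fin by auto
    then have "sum ?f ?D2 = sum ?f (?D2 - ?E) + sum ?f ?E" by (intro sum.subset_diff) auto
    then show ?thesis by simp
  qed
  also have "sum ?f (?D2 - ?E) \<le> 0"
  proof (intro sum_nonpos)
    fix d assume "d \<in> ?D2 - ?E"
    then have "moebius d \<noteq> 1" by auto
    then show "?f d \<le> 0" using moebius_cases[of d] by auto
  qed
  also have "sum ?f ?E = (\<Sum>d\<in>?E. real n ^ (r div d))" by simp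
  also have "\<dots> \<le> (\<Sum>j\<in>{1..r div q div 2}. real n ^ j)"
  proof (rule divisor_sum_bound[OF r0])
    fix d assume d: "d \<in> ?E"
    then have dd: "d dvd r" "moebius d = 1" "d \<noteq> 1" by auto
    have "2 * q \<le> d" by (rule moebius_one_big[OF dd(2,3,1) r0 q(1) qmin])
    then have "r div d \<le> r div (q * 2)" using q(1) by (intro div_le_mono2) (auto simp: prime_gt_0_nat)
    moreover have "r div d \<ge> 1" using dd(1) r0 \<open>2 * q \<le> d\<close> by (auto simp: div_greater_zero_iff dvd_imp_le)
    ultimately show "r div d \<in> {1..r div q div 2}" by (simp add: div_mult2_eq)
  qed auto
  also have "\<dots> \<le> real n ^ (r div q div 2 + 1) - real n"
    using geo_bound[of "real n"] assms by simp
  also have "real n ^ (r div q div 2 + 1) \<le> real n ^ (r div q)"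
  proof -
    have "r div q \<ge> 1" using q r0 by (auto simp: div_greater_zero_iff dvd_imp_le)
    then have "r div q div 2 + 1 \<le> r div q" by linarith
    then show ?thesis using assms by (intro power_increasing) auto
  qed
  finally have "sum ?f ?D \<le> 0" by simp
  then show ?thesis using Lf_split[OF r0, of n] by simp
qed


theorem lemma2p3:
  fixes p n m k i s :: nat
  assumes "prime p" and "n \<ge> 2" and "k \<ge> 2" and "\<not> p dvd k"
    and "0 < s" and "s \<le> i" and "i \<le> m"
  shows "seq_a p n m k i / seq_a p n m k (i - s)
         \<le> (1 / real p ^ s) *
            (2 * real p ^ s / (real (p ^ (m - i) * k)) ^ (p ^ s - 1)) ^ (p ^ (i - s))"
proof -
  define r where "r = p ^ (m - i) * k"
  define R where "R = p ^ (m - (i - s)) * k"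
  define P where "P = p ^ s"
  define t where "t = p ^ (i - s)"
  have p2: "p \<ge> 2" using assms(1) prime_ge_2_nat by blast
  have mm: "m - (i - s) = s + (m - i)" using assms(6,7) by arith
  have RR: "R = P * r" unfolding R_def r_def P_def mm
    by (simp add: power_add mult.assoc)
  have r2: "r \<ge> 2"
  proof -
    have "p ^ (m - i) \<ge> 1" using p2 by simp
    from mult_le_mono[OF this assms(3)] show ?thesis by (simp add: r_def)
  qed
  have P2: "P \<ge> 2"
  proof -
    have "p ^ 1 \<le> p ^ s" using p2 assms(5) by (intro power_increasing) auto
    then show ?thesis using p2 by (simp add: P_def)
  qed
  have R4: "R \<ge> 4" unfolding RR using mult_le_mono[OF P2 r2] by simp
  have ii: "i = s + (i - s)" using assms(6) by simp
  have piP: "p ^ i = P * t" unfolding P_def t_def by (subst ii) (simp only: power_add)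
  define Lr where "Lr = Lf n r"
  define LR where "LR = Lf n R"
  define W where "W = necklace_w n (p ^ m * k)"
  have Wpos: "W > 0" unfolding W_def w_Lf using Lf_pos[of "p ^ m * k" n] assms p2 by simp
  have Lrpos: "Lr > 0" unfolding Lr_def using Lf_pos[of r n] r2 assms by simp
  have LRpos: "LR > 0" unfolding LR_def using Lf_pos[of R n] R4 assms by simp
  have Lrup: "Lr \<le> real n ^ r" unfolding Lr_def using Lf_upper r2 assms by simp
  have LRbig: "real n ^ R \<le> 2 * LR" unfolding LR_def using Lf_big R4 assms by simp
  have rpos: "real r > 0" using r2 by simp
  define X where "X = (Lr / real r) ^ P / (LR / real R)"
  have ai: "seq_a p n m k i = (Lr / real r) ^ (p ^ i) / (real p ^ i * W)"
    unfolding seq_a_def W_def Lr_def r_def w_Lf ..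
  have as: "seq_a p n m k (i - s) = (LR / real R) ^ t / (real p ^ (i - s) * W)"
    unfolding seq_a_def W_def LR_def R_def w_Lf t_def ..
  have ratio: "seq_a p n m k i / seq_a p n m k (i - s) = (1 / real p ^ s) * X ^ t"
  proof -
    have e1: "real p ^ i = real p ^ s * real p ^ (i - s)"
      by (subst ii) (simp only: power_add)
    have "(Lr / real r) ^ (p ^ i) = ((Lr / real r) ^ P) ^ t" by (simp add: piP power_mult)
    moreover have "real p ^ (i - s) > 0" "real p ^ s > 0" using p2 by auto
    moreover have "(LR / real R) ^ t > 0" using LRpos R4 by simp
    ultimately show ?thesis unfolding ai as X_def e1 using Wpos p2 assms(5)
      by (simp add: power_divide field_simps)
  qed
  have X0: "X \<ge> 0" unfolding X_def using Lrpos LRpos R4 rpos by simp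
  have XY: "X \<le> 2 * real p ^ s / real r ^ (P - 1)"
  proof -
    have rP: "real r ^ P = real r ^ (P - 1) * real r" using P2
      by (metis Suc_diff_1 less_le_trans pos2 power_Suc2)
    have "X = Lr ^ P * real p ^ s / (real r ^ (P - 1) * LR)"
      unfolding X_def RR using rpos LRpos rP by (simp add: power_divide P_def field_simps)
    also have "Lr ^ P \<le> 2 * LR"
    proof -
      have "Lr ^ P \<le> (real n ^ r) ^ P" using Lrpos Lrup by (intro power_mono) auto
      also have "\<dots> = real n ^ R" by (simp add: RR power_mult[symmetric] mult.commute)
      finally show ?thesis using LRbig by simp
    qed
    then have "Lr ^ P * real p ^ s / (real r ^ (P - 1) * LR) \<le> 2 * LR * real p ^ s / (real r ^ (P - 1) * LR)"
      using rpos LRpos by (intro divide_right_mono mult_right_mono) auto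
    also have "\<dots> = 2 * real p ^ s / real r ^ (P - 1)" using LRpos by simp
    finally show ?thesis .
  qed
  have "X ^ t \<le> (2 * real p ^ s / real r ^ (P - 1)) ^ t"
    using X0 XY by (intro power_mono) auto
  then have "(1 / real p ^ s) * X ^ t \<le> (1 / real p ^ s) * (2 * real p ^ s / real r ^ (P - 1)) ^ t"
    by (intro mult_left_mono) auto
  then show ?thesis unfolding ratio by (simp add: r_def P_def t_def)
qed

end
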